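(* Let $\eta=10^{-4}$. There are absolute constants $c,\epsilon_0>0$ such that for every $\epsilon\in(0,\epsilon_0)$ the following holds. Suppose a (possibly adaptive and randomized) procedure tosses a coin whose probability of heads is $p\in\{1/2-\eta,1/2+\eta\}$ at most $m$ times, and then outputs either a value in $\{1/2-\eta,1/2+\eta\}$ or the symbol `unknown'. If, for each of the two possible values of $p$, the procedure outputs `unknown' with probability at most $0.9$ and outputs the wrong value (the element of $\{1/2-\eta,1/2+\eta\}$ different from $p$) with probability at most $\epsilon$, then $m\ge c\log(1/\epsilon)$.
   Context: Coin tosses are independent; each toss comes up heads with probability $p$. *)

theory Defs
  imports "HOL-Probability.Probability"
begin

definition eta :: real where "eta = 1 / 10000"

text \<open>A deterministic adaptive coin-tossing procedure: a decision tree.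
  Toss f tosses the coin (True = heads) and continues with f applied to the result;
  Output r stops and outputs r, where None stands for the symbol unknown.\<close>
datatype proc = Output "real option" | Toss "bool \<Rightarrow> proc"

primrec depth :: "proc \<Rightarrow> nat" where
  "depth (Output r) = 0"
| "depth (Toss f) = Suc (max (depth (f True)) (depth (f False)))"

primrec run :: "real \<Rightarrow> proc \<Rightarrow> real option pmf" where
  "run p (Output r) = return_pmf r"
| "run p (Toss f) = bernoulli_pmf p \<bind> (\<lambda>b. run p (f b))"

text \<open>A randomized procedure is a probability distribution over deterministic ones
  (internal randomness drawn in advance, independently of the coin).\<close>
definition outcome :: "real \<Rightarrow> proc pmf \<Rightarrow> real option pmf" where
  "outcome p D = D \<bind> run p"

end

theory Submission
  imports Defs
begin

definition ra :: real where "ra = 5001/10000"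
definition rb :: real where "rb = 4999/10000"

lemma run_ratio:
  "pmf (run ra T) x \<ge> (rb/ra)^(depth T) * pmf (run rb T) x"
proof (induction T)
  case (Output r)
  then show ?case by simp
next
  case (Toss f)
  let ?d = "max (depth (f True)) (depth (f False))"
  let ?r = "rb/ra"
  have r0: "0 \<le> ?r" "?r \<le> 1" by (auto simp: ra_def rb_def)
  have p1: "?r^?d \<le> ?r^depth (f True)" "?r^?d \<le> ?r^depth (f False)"
    using r0 by (auto intro!: power_decreasing)
  have A: "pmf (run ra (Toss f)) x = pmf (run ra (f True)) x * ra + pmf (run ra (f False)) x * (1 - ra)"
    by (simp add: pmf_bind ra_def)
  have B: "pmf (run rb (Toss f)) x = pmf (run rb (f True)) x * rb + pmf (run rb (f False)) x * (1 - rb)"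
    by (simp add: pmf_bind rb_def)
  have T1: "pmf (run ra (f True)) x * ra \<ge> ?r^Suc ?d * (pmf (run rb (f True)) x * rb)"
  proof -
    have "?r^Suc ?d * (pmf (run rb (f True)) x * rb) = ?r * rb * (?r^?d * pmf (run rb (f True)) x)"
      by (simp add: algebra_simps)
    also have "\<dots> \<le> ra * (?r^depth (f True) * pmf (run rb (f True)) x)"
      by (rule mult_mono) (use p1 r0 in \<open>auto simp: ra_def rb_def intro!: mult_right_mono\<close>)
    also have "\<dots> \<le> ra * pmf (run ra (f True)) x"
      using Toss(1)[OF rangeI[of f True]] by (intro mult_left_mono) (auto simp: ra_def)
    finally show ?thesis by (simp add: mult.commute)
  qed
  have T2: "pmf (run ra (f False)) x * (1 - ra) \<ge> ?r^Suc ?d * (pmf (run rb (f False)) x * (1 - rb))"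
  proof -
    have "?r^Suc ?d * (pmf (run rb (f False)) x * (1 - rb)) = (?r * (1 - rb)) * (?r^?d * pmf (run rb (f False)) x)"
      by (simp add: algebra_simps)
    also have "\<dots> \<le> (1 - ra) * (?r^depth (f False) * pmf (run rb (f False)) x)"
      by (rule mult_mono) (use p1 r0 in \<open>auto simp: ra_def rb_def intro!: mult_right_mono\<close>)
    also have "\<dots> \<le> (1 - ra) * pmf (run ra (f False)) x"
      using Toss(1)[OF rangeI[of f False]] by (intro mult_left_mono) (auto simp: ra_def)
    finally show ?thesis by (simp add: mult.commute)
  qed
  have E: "?r^Suc ?d * pmf (run rb (Toss f)) x = ?r^Suc ?d * (pmf (run rb (f True)) x * rb) + ?r^Suc ?d * (pmf (run rb (f False)) x * (1 - rb))"
    unfolding B by (simp only: distrib_left)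
  have "?r^Suc ?d * pmf (run rb (Toss f)) x \<le> pmf (run ra (Toss f)) x"
    unfolding E A using T1 T2 by linarith
  then show ?case by simp
qed

lemma outcome_ratio:
  assumes "\<forall>T\<in>set_pmf D. depth T \<le> m"
  shows "pmf (outcome ra D) x \<ge> (rb/ra)^m * pmf (outcome rb D) x"
proof -
  have r0: "0 \<le> rb/ra" "rb/ra \<le> 1" by (auto simp: ra_def rb_def)
  have "(rb/ra)^m * pmf (outcome rb D) x = (\<integral>T. (rb/ra)^m * pmf (run rb T) x \<partial>measure_pmf D)"
    by (simp add: outcome_def pmf_bind)
  also have "\<dots> \<le> (\<integral>T. pmf (run ra T) x \<partial>measure_pmf D)"
  proof (rule integral_mono_AE)
    show "integrable (measure_pmf D) (\<lambda>T. (rb/ra)^m * pmf (run rb T) x)"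
      by (intro integrable_mult_right measure_pmf.integrable_const_bound[where B=1]) (auto simp: pmf_le_1)
    show "integrable (measure_pmf D) (\<lambda>T. pmf (run ra T) x)"
      by (intro measure_pmf.integrable_const_bound[where B=1]) (auto simp: pmf_le_1)
    show "AE T in measure_pmf D. (rb/ra)^m * pmf (run rb T) x \<le> pmf (run ra T) x"
    proof (rule AE_pmfI)
      fix T assume "T \<in> set_pmf D"
      then have "depth T \<le> m" using assms by auto
      then have "(rb/ra)^m \<le> (rb/ra)^depth T" using r0 by (intro power_decreasing) auto
      then have "(rb/ra)^m * pmf (run rb T) x \<le> (rb/ra)^depth T * pmf (run rb T) x"
        by (intro mult_right_mono) auto
      then show "(rb/ra)^m * pmf (run rb T) x \<le> pmf (run ra T) x"
        using run_ratio[of T x] by linarith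
    qed
  qed
  also have "\<dots> = pmf (outcome ra D) x" by (simp add: outcome_def pmf_bind)
  finally show ?thesis .
qed

theorem theorem4p2:
  shows "\<exists>c \<epsilon>0. c > 0 \<and> \<epsilon>0 > 0 \<and>
    (\<forall>\<epsilon>::real. 0 < \<epsilon> \<and> \<epsilon> < \<epsilon>0 \<longrightarrow>
      (\<forall>(m::nat) (D::proc pmf).
         (\<forall>T\<in>set_pmf D. depth T \<le> m) \<longrightarrow>
         (\<forall>p\<in>{1/2 - eta, 1/2 + eta}.
             set_pmf (outcome p D) \<subseteq> {None, Some (1/2 - eta), Some (1/2 + eta)} \<and>
             pmf (outcome p D) None \<le> 9/10 \<and>
             measure_pmf.prob (outcome p D) {Some q | q. q \<in> {1/2 - eta, 1/2 + eta} \<and> q \<noteq> p} \<le> \<epsilon>)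
         \<longrightarrow> real m \<ge> c * ln (1 / \<epsilon>)))"
proof -
  define L where "L = ln (ra/rb)"
  have L0: "L > 0" unfolding L_def ra_def rb_def by (rule ln_gt_zero) simp
  have ea: "1/2 + eta = ra" and eb: "1/2 - eta = rb" by (simp_all add: eta_def ra_def rb_def)
  show ?thesis
  proof (rule exI[of _ "1/(2*L)"], rule exI[of _ "1/400::real"], intro conjI allI impI)
    show "1/(2*L) > 0" using L0 by simp
    show "(1/400::real) > 0" by simp
    fix \<epsilon> :: real and m D
    assume e: "0 < \<epsilon> \<and> \<epsilon> < 1/400"
    assume dep: "\<forall>T\<in>set_pmf D. depth T \<le> m"
    assume H: "\<forall>p\<in>{1/2 - eta, 1/2 + eta}.
             set_pmf (outcome p D) \<subseteq> {None, Some (1/2 - eta), Some (1/2 + eta)} \<and>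
             pmf (outcome p D) None \<le> 9/10 \<and>
             measure_pmf.prob (outcome p D) {Some q | q. q \<in> {1/2 - eta, 1/2 + eta} \<and> q \<noteq> p} \<le> \<epsilon>"
    have neq: "ra \<noteq> rb" by (simp add: ra_def rb_def)
    have Hb: "set_pmf (outcome rb D) \<subseteq> {None, Some rb, Some ra}"
      "pmf (outcome rb D) None \<le> 9/10"
      "measure_pmf.prob (outcome rb D) {Some q | q. q \<in> {rb, ra} \<and> q \<noteq> rb} \<le> \<epsilon>"
      using H unfolding ea eb by auto
    have Ha: "measure_pmf.prob (outcome ra D) {Some q | q. q \<in> {rb, ra} \<and> q \<noteq> ra} \<le> \<epsilon>"
      using H unfolding ea eb by auto
    have s1: "{Some q | q. q \<in> {rb, ra} \<and> q \<noteq> rb} = {Some ra}" using neq by auto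
    have s2: "{Some q | q. q \<in> {rb, ra} \<and> q \<noteq> ra} = {Some rb}" using neq by auto
    have pa: "pmf (outcome ra D) (Some rb) \<le> \<epsilon>" using Ha unfolding s2 by (simp add: measure_pmf_single)
    have pb: "pmf (outcome rb D) (Some ra) \<le> \<epsilon>" using Hb(3) unfolding s1 by (simp add: measure_pmf_single)
    have sum: "(\<Sum>x\<in>{None, Some rb, Some ra}. pmf (outcome rb D) x) = 1"
      by (rule sum_pmf_eq_1) (use Hb(1) in auto)
    hence "pmf (outcome rb D) None + pmf (outcome rb D) (Some rb) + pmf (outcome rb D) (Some ra) = 1"
      using neq by simp
    hence pbb: "pmf (outcome rb D) (Some rb) \<ge> 1/20" using Hb(2) pb e by linarith
    have "\<epsilon> \<ge> (rb/ra)^m * (1/20)"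
    proof -
      have "(rb/ra)^m * (1/20) \<le> (rb/ra)^m * pmf (outcome rb D) (Some rb)"
        using pbb by (intro mult_left_mono) (auto simp: ra_def rb_def)
      also have "\<dots> \<le> pmf (outcome ra D) (Some rb)" by (rule outcome_ratio[OF dep])
      finally show ?thesis using pa by linarith
    qed
    hence "ln ((rb/ra)^m * (1/20)) \<le> ln \<epsilon>"
      by (subst ln_le_cancel_iff) (auto simp: ra_def rb_def e)
    hence "- real m * L - ln 20 \<le> ln \<epsilon>"
      by (simp add: ln_mult ln_realpow ln_div L_def ra_def rb_def algebra_simps)
    moreover have "ln (1/\<epsilon>) = - ln \<epsilon>" using e by (simp add: ln_div)
    moreover have "ln 400 \<le> ln (1/\<epsilon>)" using e by (subst ln_le_cancel_iff) (auto simp: field_simps)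
    moreover have "ln (400::real) = 2 * ln 20"
      using ln_realpow[of "20::real" 2] by simp
    ultimately have "ln (1/\<epsilon>) \<le> 2 * (real m * L)" by linarith
    thus "real m \<ge> 1/(2*L) * ln (1/\<epsilon>)" using L0 by (simp add: field_simps)
  qed
qed

end
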